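(* Let $\mathcal{Q}$ be a parabolic subset of $\mathcal{R}$, $C$ a Weyl chamber with $\mathcal{R}^+(C)\subseteq\mathcal{Q}$, and $\mathrm{s}$ an involution of $\mathcal{R}$. Let $\Phi_C=\mathcal{B}(C)\cap\mathcal{Q}^n$, $\Phi_C^\vee=\mathcal{B}(C)\setminus\Phi_C$, $\Phi_C^{\mathrm{s},+}=\{\alpha\in\Phi_C\mid\mathrm{s}(\alpha)\in\mathcal{R}^+(C)\}$, $\Phi_C^{\mathrm{s},-}=\{\alpha\in\Phi_C\mid\mathrm{s}(\alpha)\in\mathcal{R}^-(C)\}$, and $$\Psi_C=\Big\{\alpha\in\Phi_C^{\mathrm{s},+}\ \Big|\ \mathrm{s}(\alpha)\in\mathcal{Q}^n,\ \alpha\notin\bigcup_{\beta\in\Phi_C^\vee\cup\Phi_C^{\mathrm{s},-}}\mathrm{supp}_C(\mathrm{s}(\beta))\Big\}.$$ Then $\mathcal{Q}_{\Psi_C}$ is the smallest parabolic (equivalently, closed) subset of $\mathcal{R}$ containing $\mathcal{Q}\cup\mathrm{s}(\mathcal{Q})$; in particular $(\mathcal{Q}_{\Psi_C},\mathrm{s})$ is totally real. Consequently $(\mathcal{Q},\mathrm{s})$ is fundamental if and only if $\Psi_C=\emptyset$.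
   Context: $\mathcal{R}$ is a reduced root system in a Euclidean space $V$. Closed subset: $\alpha,\beta\in\mathcal{Q}$, $\alpha+\beta\in\mathcal{R}\Rightarrow\alpha+\beta\in\mathcal{Q}$; parabolic: closed with $\mathcal{Q}\cup(-\mathcal{Q})=\mathcal{R}$. $\mathcal{Q}^n=\{\alpha\in\mathcal{Q}\mid-\alpha\notin\mathcal{Q}\}$. For a Weyl chamber $C$: $\mathcal{R}^\pm(C)$ positive/negative roots, $\mathcal{B}(C)$ simple roots, $\mathrm{supp}_C(\alpha)$ the set of simple roots with nonzero coefficient in $\alpha$. For $\Phi\subseteq\mathcal{B}(C)$, $\mathcal{Q}_\Phi=\mathcal{R}^+(C)\cup\{\alpha\in\mathcal{R}^-(C)\mid\mathrm{supp}_C(\alpha)\cap\Phi=\emptyset\}$ (so $\mathcal{Q}_\emptyset=\mathcal{R}$). An involution of $\mathcal{R}$ is a linear isometric involution $\mathrm{s}$ of $V$ with $\mathrm{s}(\mathcal{R})=\mathcal{R}$. A pair $(\mathcal{Q}',\mathrm{s})$ is totally real if $\mathrm{s}(\mathcal{Q}')=\mathcal{Q}'$; $(\mathcal{Q},\mathrm{s})$ is fundamental if the smallest closed subset of $\mathcal{R}$ containing $\mathcal{Q}\cup\mathrm{s}(\mathcal{Q})$ is $\mathcal{R}$. *)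

theory Defs
  imports "HOL-Analysis.Analysis"
begin

definition root_reflection :: "'a::euclidean_space \<Rightarrow> 'a \<Rightarrow> 'a" where
  "root_reflection \<alpha> x = x - ((2 * (\<alpha> \<bullet> x)) / (\<alpha> \<bullet> \<alpha>)) *\<^sub>R \<alpha>"

definition reduced_root_system :: "'a::euclidean_space set \<Rightarrow> bool" where
  "reduced_root_system R \<longleftrightarrow>
     finite R \<and> 0 \<notin> R \<and> span R = UNIV \<and>
     (\<forall>\<alpha>\<in>R. root_reflection \<alpha> ` R = R) \<and>
     (\<forall>\<alpha>\<in>R. \<forall>\<beta>\<in>R. (2 * (\<alpha> \<bullet> \<beta>)) / (\<alpha> \<bullet> \<alpha>) \<in> \<int>) \<and>
     (\<forall>\<alpha>\<in>R. \<forall>c::real. c *\<^sub>R \<alpha> \<in> R \<longrightarrow> c = 1 \<or> c = -1)"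

definition root_hyperplanes :: "'a::euclidean_space set \<Rightarrow> 'a set" where
  "root_hyperplanes R = (\<Union>\<alpha>\<in>R. {x. \<alpha> \<bullet> x = 0})"

definition weyl_chamber :: "'a::euclidean_space set \<Rightarrow> 'a set \<Rightarrow> bool" where
  "weyl_chamber R C \<longleftrightarrow>
     (\<exists>x. x \<notin> root_hyperplanes R \<and> C = connected_component_set (- root_hyperplanes R) x)"

definition pos_roots :: "'a::euclidean_space set \<Rightarrow> 'a set \<Rightarrow> 'a set" where
  "pos_roots R C = {\<alpha>\<in>R. \<forall>x\<in>C. 0 < \<alpha> \<bullet> x}"

definition neg_roots :: "'a::euclidean_space set \<Rightarrow> 'a set \<Rightarrow> 'a set" where
  "neg_roots R C = {\<alpha>\<in>R. \<forall>x\<in>C. \<alpha> \<bullet> x < 0}"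

definition simple_roots :: "'a::euclidean_space set \<Rightarrow> 'a set \<Rightarrow> 'a set" where
  "simple_roots R C = {\<alpha>\<in>pos_roots R C.
     \<not> (\<exists>\<beta>\<in>pos_roots R C. \<exists>\<gamma>\<in>pos_roots R C. \<alpha> = \<beta> + \<gamma>)}"

text \<open>Support: simple roots with nonzero coefficient in the expansion of \<alpha> in the basis B(C)
  (the expansion is unique since B(C) is linearly independent).\<close>

definition supp :: "'a::euclidean_space set \<Rightarrow> 'a set \<Rightarrow> 'a \<Rightarrow> 'a set" where
  "supp R C \<alpha> = {\<beta>\<in>simple_roots R C. \<exists>c. \<alpha> = (\<Sum>\<gamma>\<in>simple_roots R C. c \<gamma> *\<^sub>R \<gamma>) \<and> c \<beta> \<noteq> 0}"

definition closed_subset :: "'a::euclidean_space set \<Rightarrow> 'a set \<Rightarrow> bool" where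
  "closed_subset R Q \<longleftrightarrow> Q \<subseteq> R \<and> (\<forall>\<alpha>\<in>Q. \<forall>\<beta>\<in>Q. \<alpha> + \<beta> \<in> R \<longrightarrow> \<alpha> + \<beta> \<in> Q)"

definition parabolic :: "'a::euclidean_space set \<Rightarrow> 'a set \<Rightarrow> bool" where
  "parabolic R Q \<longleftrightarrow> closed_subset R Q \<and> Q \<union> uminus ` Q = R"

definition nilpart :: "'a::euclidean_space set \<Rightarrow> 'a set" where
  "nilpart Q = {\<alpha>\<in>Q. - \<alpha> \<notin> Q}"

definition Q_of :: "'a::euclidean_space set \<Rightarrow> 'a set \<Rightarrow> 'a set \<Rightarrow> 'a set" where
  "Q_of R C \<Phi> = pos_roots R C \<union> {\<alpha>\<in>neg_roots R C. supp R C \<alpha> \<inter> \<Phi> = {}}"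

definition root_involution :: "'a::euclidean_space set \<Rightarrow> ('a \<Rightarrow> 'a) \<Rightarrow> bool" where
  "root_involution R s \<longleftrightarrow> linear s \<and> (\<forall>x. norm (s x) = norm x) \<and> (\<forall>x. s (s x) = x) \<and> s ` R = R"

definition closed_hull :: "'a::euclidean_space set \<Rightarrow> 'a set \<Rightarrow> 'a set" where
  "closed_hull R A = \<Inter>{Q'. closed_subset R Q' \<and> A \<subseteq> Q'}"

definition totally_real :: "'a::euclidean_space set \<Rightarrow> ('a \<Rightarrow> 'a) \<Rightarrow> bool" where
  "totally_real Q s \<longleftrightarrow> s ` Q = Q"

definition fundamental :: "'a::euclidean_space set \<Rightarrow> 'a set \<Rightarrow> ('a \<Rightarrow> 'a) \<Rightarrow> bool" where
  "fundamental R Q s \<longleftrightarrow> closed_hull R (Q \<union> s ` Q) = R"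

end

theory Submission
  imports Defs
begin

locale RS =
  fixes R :: "'a::euclidean_space set" and C :: "'a set" and x0 :: 'a
  assumes rrs: "reduced_root_system R"
    and pos_eq: "pos_roots R C = {\<alpha>\<in>R. 0 < \<alpha> \<bullet> x0}"
    and neg_eq: "neg_roots R C = {\<alpha>\<in>R. \<alpha> \<bullet> x0 < 0}"
    and nz: "\<And>\<alpha>. \<alpha>\<in>R \<Longrightarrow> \<alpha> \<bullet> x0 \<noteq> 0"
begin

abbreviation "P \<equiv> pos_roots R C"
abbreviation "N \<equiv> neg_roots R C"
abbreviation "B \<equiv> simple_roots R C"

lemma finR: "finite R" using rrs unfolding reduced_root_system_def by blast
lemma zero_notin: "0 \<notin> R" using rrs unfolding reduced_root_system_def by blast
lemma refl_in: "\<alpha>\<in>R \<Longrightarrow> \<beta>\<in>R \<Longrightarrow> root_reflection \<alpha> \<beta> \<in> R"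
  using rrs unfolding reduced_root_system_def by blast
lemma int_in: "\<alpha>\<in>R \<Longrightarrow> \<beta>\<in>R \<Longrightarrow> 2*(\<alpha>\<bullet>\<beta>)/(\<alpha>\<bullet>\<alpha>) \<in> \<int>"
  using rrs unfolding reduced_root_system_def by blast
lemma reduced: "\<alpha>\<in>R \<Longrightarrow> c *\<^sub>R \<alpha> \<in> R \<Longrightarrow> c = 1 \<or> c = -1"
  using rrs unfolding reduced_root_system_def by blast

lemma sq_pos: "\<alpha>\<in>R \<Longrightarrow> 0 < \<alpha> \<bullet> \<alpha>"
  using zero_notin by (metis inner_gt_zero_iff)

lemma neg_in: assumes "\<alpha>\<in>R" shows "-\<alpha> \<in> R"
proof -
  have "root_reflection \<alpha> \<alpha> = -\<alpha>"
    using sq_pos[OF assms] by (simp add: root_reflection_def algebra_simps scaleR_2)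
  then show ?thesis using refl_in[OF assms assms] by simp
qed

lemma P_sub: "P \<subseteq> R" and N_sub: "N \<subseteq> R" and B_sub: "B \<subseteq> P"
  by (auto simp: pos_eq neg_eq simple_roots_def)

lemma finB: "finite B" using finR B_sub P_sub finite_subset by blast

lemma R_split: "\<alpha>\<in>R \<Longrightarrow> \<alpha> \<in> P \<or> \<alpha> \<in> N"
  using nz by (force simp: pos_eq neg_eq)
lemma PN_disj: "\<alpha> \<in> P \<Longrightarrow> \<alpha> \<notin> N"
  by (simp add: pos_eq neg_eq)
lemma P_negN: "\<alpha> \<in> P \<Longrightarrow> -\<alpha> \<in> N"
  using neg_in by (simp add: pos_eq neg_eq)
lemma N_negP: "\<alpha> \<in> N \<Longrightarrow> -\<alpha> \<in> P"
  using neg_in by (simp add: pos_eq neg_eq)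
lemma B_x0: "\<gamma> \<in> B \<Longrightarrow> 0 < \<gamma> \<bullet> x0"
  using B_sub by (auto simp: pos_eq)

lemma x0_induct[consumes 1, case_names step]:
  assumes "\<alpha> \<in> R"
    and step: "\<And>\<alpha>. \<alpha>\<in>R \<Longrightarrow> (\<And>\<beta>. \<beta>\<in>R \<Longrightarrow> \<beta> \<bullet> x0 < \<alpha> \<bullet> x0 \<Longrightarrow> Q \<beta>) \<Longrightarrow> Q \<alpha>"
  shows "Q \<alpha>"
  using assms(1)
proof (induction "card {\<beta>\<in>R. \<beta> \<bullet> x0 < \<alpha> \<bullet> x0}" arbitrary: \<alpha> rule: less_induct)
  case less
  show ?case
  proof (rule step[OF less.prems])
    fix \<beta> assume b: "\<beta>\<in>R" "\<beta> \<bullet> x0 < \<alpha> \<bullet> x0"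
    have "{\<gamma>\<in>R. \<gamma> \<bullet> x0 < \<beta> \<bullet> x0} \<subset> {\<gamma>\<in>R. \<gamma> \<bullet> x0 < \<alpha> \<bullet> x0}"
      using b by auto
    then have "card {\<gamma>\<in>R. \<gamma> \<bullet> x0 < \<beta> \<bullet> x0} < card {\<gamma>\<in>R. \<gamma> \<bullet> x0 < \<alpha> \<bullet> x0}"
      by (rule psubset_card_mono[rotated]) (use finR in auto)
    then show "Q \<beta>" using less.hyps b by blast
  qed
qed

lemma diff_root:
  assumes a: "\<alpha>\<in>R" and b: "\<beta>\<in>R" and p: "0 < \<alpha> \<bullet> \<beta>" and ne: "\<alpha> \<noteq> \<beta>"
  shows "\<alpha> - \<beta> \<in> R"
proof -
  have aa: "0 < \<alpha> \<bullet> \<alpha>" and bb: "0 < \<beta> \<bullet> \<beta>" using sq_pos a b by auto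
  have na: "0 < norm \<alpha>" and nb: "0 < norm \<beta>" using a b zero_notin by auto
  have lt: "\<alpha> \<bullet> \<beta> < norm \<alpha> * norm \<beta>"
  proof (rule ccontr)
    assume "\<not> ?thesis"
    then have "\<bar>\<alpha> \<bullet> \<beta>\<bar> = norm \<alpha> * norm \<beta>"
      using norm_cauchy_schwarz[of \<alpha> \<beta>] p by linarith
    then have "norm \<alpha> *\<^sub>R \<beta> = norm \<beta> *\<^sub>R \<alpha> \<or> norm \<alpha> *\<^sub>R \<beta> = - norm \<beta> *\<^sub>R \<alpha>"
      using norm_cauchy_schwarz_abs_eq by blast
    then have "\<beta> = (norm \<beta> / norm \<alpha>) *\<^sub>R \<alpha> \<or> \<beta> = (- norm \<beta> / norm \<alpha>) *\<^sub>R \<alpha>"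
    proof
      assume h: "norm \<alpha> *\<^sub>R \<beta> = norm \<beta> *\<^sub>R \<alpha>"
      have "\<beta> = inverse (norm \<alpha>) *\<^sub>R (norm \<alpha> *\<^sub>R \<beta>)" using na by simp
      also have "\<dots> = (norm \<beta> / norm \<alpha>) *\<^sub>R \<alpha>" unfolding h by (simp add: divide_inverse mult.commute)
      finally show ?thesis by blast
    next
      assume h: "norm \<alpha> *\<^sub>R \<beta> = - norm \<beta> *\<^sub>R \<alpha>"
      have "\<beta> = inverse (norm \<alpha>) *\<^sub>R (norm \<alpha> *\<^sub>R \<beta>)" using na by simp
      also have "\<dots> = (- norm \<beta> / norm \<alpha>) *\<^sub>R \<alpha>" unfolding h by (simp add: divide_inverse mult.commute)
      finally show ?thesis by blast
    qed
    then consider "\<beta> = (norm \<beta> / norm \<alpha>) *\<^sub>R \<alpha>" | "\<beta> = (- norm \<beta> / norm \<alpha>) *\<^sub>R \<alpha>" by blast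
    then show False
    proof cases
      case 1
      then have "norm \<beta> / norm \<alpha> = 1 \<or> norm \<beta> / norm \<alpha> = -1" using reduced[OF a] b by metis
      then have "norm \<beta> / norm \<alpha> = 1" using divide_pos_pos[OF nb na] by linarith
      then show False using 1 ne by (metis scaleR_one)
    next
      case 2
      then have "\<alpha> \<bullet> \<beta> = \<alpha> \<bullet> ((- norm \<beta> / norm \<alpha>) *\<^sub>R \<alpha>)"
        by (rule arg_cong)
      then have "\<alpha> \<bullet> \<beta> = (- norm \<beta> / norm \<alpha>) * (\<alpha> \<bullet> \<alpha>)"
        by (simp only: inner_scaleR_right)
      moreover have "(- norm \<beta> / norm \<alpha>) * (\<alpha> \<bullet> \<alpha>) < 0" using na nb aa
        by (simp add: mult_neg_pos)
      ultimately show False using p by simp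
    qed
  qed
  have sq: "(\<alpha> \<bullet> \<beta>)^2 < (\<alpha> \<bullet> \<alpha>) * (\<beta> \<bullet> \<beta>)"
  proof -
    have "(\<alpha> \<bullet> \<beta>)^2 < (norm \<alpha> * norm \<beta>)^2"
      using lt p by (simp add: power_strict_mono)
    also have "\<dots> = (\<alpha> \<bullet> \<alpha>) * (\<beta> \<bullet> \<beta>)"
      by (simp add: power_mult_distrib power2_norm_eq_inner)
    finally show ?thesis .
  qed
  obtain k1 where k1: "2*(\<alpha>\<bullet>\<beta>)/(\<alpha>\<bullet>\<alpha>) = of_int k1" using int_in[OF a b] Ints_cases by metis
  obtain k2 where k2: "2*(\<beta>\<bullet>\<alpha>)/(\<beta>\<bullet>\<beta>) = of_int k2" using int_in[OF b a] Ints_cases by metis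
  have "0 < 2*(\<alpha>\<bullet>\<beta>)/(\<alpha>\<bullet>\<alpha>)" using p aa by simp
  then have k1p: "k1 > 0" using k1 by simp
  have "0 < 2*(\<beta>\<bullet>\<alpha>)/(\<beta>\<bullet>\<beta>)" using p bb by (simp add: inner_commute)
  then have k2p: "k2 > 0" using k2 by simp
  have "of_int (k1 * k2) = 4 * (\<alpha> \<bullet> \<beta>)^2 / ((\<alpha>\<bullet>\<alpha>) * (\<beta>\<bullet>\<beta>))"
    using k1[symmetric] k2[symmetric] by (simp add: inner_commute power2_eq_square)
  also have "\<dots> < 4" using sq aa bb by (simp add: divide_less_eq)
  finally have "real_of_int (k1 * k2) < real_of_int 4" by simp
  then have "k1 * k2 < 4" by (rule of_int_less_iff[THEN iffD1])
  have "k1 = 1 \<or> k2 = 1"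
  proof (rule ccontr)
    assume "\<not> (k1 = 1 \<or> k2 = 1)"
    then have "k1 \<ge> 2" "k2 \<ge> 2" using k1p k2p by auto
    then have "k1 * k2 \<ge> 2 * 2" by (intro mult_mono) auto
    then show False using \<open>k1 * k2 < 4\<close> by simp
  qed
  then show ?thesis
  proof
    assume "k1 = 1"
    then have "root_reflection \<alpha> \<beta> = \<beta> - \<alpha>" using k1 p
      by (simp add: root_reflection_def inner_commute)
    then have "\<beta> - \<alpha> \<in> R" using refl_in[OF a b] by simp
    then show ?thesis using neg_in by fastforce
  next
    assume "k2 = 1"
    then have "root_reflection \<beta> \<alpha> = \<alpha> - \<beta>" using k2 p
      by (simp add: root_reflection_def inner_commute)
    then show ?thesis using refl_in[OF b a] by simp
  qed
qed

lemma simple_inner: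
  assumes a: "\<alpha>\<in>B" and b: "\<beta>\<in>B" and ne: "\<alpha>\<noteq>\<beta>" shows "\<alpha> \<bullet> \<beta> \<le> 0"
proof (rule ccontr)
  assume "\<not> ?thesis"
  moreover have "\<alpha> \<in> R" "\<beta> \<in> R" using a b B_sub P_sub by auto
  ultimately have d: "\<alpha> - \<beta> \<in> R" using diff_root ne by simp
  have aP: "\<alpha> \<in> P" and bP: "\<beta> \<in> P" using a b B_sub by auto
  have na: "\<not> (\<exists>x\<in>P. \<exists>y\<in>P. \<alpha> = x + y)" and nb: "\<not> (\<exists>x\<in>P. \<exists>y\<in>P. \<beta> = x + y)"
    using a b unfolding simple_roots_def by auto
  show False
  proof (cases "\<alpha> - \<beta> \<in> P")
    case True
    moreover have "\<alpha> = (\<alpha> - \<beta>) + \<beta>" by simp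
    ultimately show False using na bP by blast
  next
    case False
    then have "\<beta> - \<alpha> \<in> P" using R_split[OF d] N_negP by force
    moreover have "\<beta> = (\<beta> - \<alpha>) + \<alpha>" by simp
    ultimately show False using nb aP by blast
  qed
qed

lemma indep:
  assumes z: "(\<Sum>\<gamma>\<in>B. c \<gamma> *\<^sub>R \<gamma>) = 0" and g: "\<gamma> \<in> B" shows "c \<gamma> = 0"
proof -
  define Pp where "Pp = {\<gamma>\<in>B. 0 < c \<gamma>}"
  define Nn where "Nn = {\<gamma>\<in>B. c \<gamma> < 0}"
  have fP: "finite Pp" and fN: "finite Nn" using finB by (auto simp: Pp_def Nn_def)
  define v where "v = (\<Sum>\<gamma>\<in>Pp. c \<gamma> *\<^sub>R \<gamma>)"
  define w where "w = (\<Sum>\<gamma>\<in>Nn. (- c \<gamma>) *\<^sub>R \<gamma>)"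
  have "(\<Sum>\<gamma>\<in>B. c \<gamma> *\<^sub>R \<gamma>) = (\<Sum>\<gamma>\<in>B. (if 0 < c \<gamma> then c \<gamma> *\<^sub>R \<gamma> else 0) + (if c \<gamma> < 0 then c \<gamma> *\<^sub>R \<gamma> else 0))"
    by (rule sum.cong) auto
  also have "\<dots> = (\<Sum>\<gamma>\<in>B. (if 0 < c \<gamma> then c \<gamma> *\<^sub>R \<gamma> else 0)) + (\<Sum>\<gamma>\<in>B. (if c \<gamma> < 0 then c \<gamma> *\<^sub>R \<gamma> else 0))"
    by (rule sum.distrib)
  also have "\<dots> = v - w"
    unfolding v_def w_def Pp_def Nn_def using finB
    by (simp add: sum.inter_filter sum_negf)
  finally have vw: "v = w" using z by simp
  have "v \<bullet> v = v \<bullet> w" using vw by simp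
  also have "\<dots> = (\<Sum>\<gamma>\<in>Pp. c \<gamma> * (\<gamma> \<bullet> w))"
    unfolding v_def by (simp add: inner_sum_left)
  also have "\<dots> \<le> 0"
  proof (intro sum_nonpos)
    fix \<gamma> assume a: "\<gamma> \<in> Pp"
    have "\<gamma> \<bullet> w = (\<Sum>\<delta>\<in>Nn. (- c \<delta>) * (\<gamma> \<bullet> \<delta>))"
      unfolding w_def by (simp only: inner_sum_right inner_scaleR_right)
    also have "\<dots> \<le> 0"
    proof (intro sum_nonpos)
      fix \<delta> assume d: "\<delta> \<in> Nn"
      then have "\<gamma> \<noteq> \<delta>" "\<gamma> \<in> B" "\<delta> \<in> B" using a by (auto simp: Pp_def Nn_def)
      then have gd: "\<gamma> \<bullet> \<delta> \<le> 0" by (intro simple_inner)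
      have "0 \<le> - c \<delta>" using d by (auto simp: Nn_def)
      from this gd show "(- c \<delta>) * (\<gamma> \<bullet> \<delta>) \<le> 0" by (rule mult_nonneg_nonpos)
    qed
    finally have h1: "\<gamma> \<bullet> w \<le> 0" .
    have h2: "0 \<le> c \<gamma>" using a by (auto simp: Pp_def)
    show "c \<gamma> * (\<gamma> \<bullet> w) \<le> 0" using mult_nonneg_nonpos[OF h2 h1] .
  qed
  finally have "v \<bullet> v \<le> 0" .
  then have "v \<bullet> v = 0" using inner_ge_zero[of v] by linarith
  then have v0: "v = 0" by simp
  then have w0: "w = 0" using vw by simp
  have "Pp = {}"
  proof (rule ccontr)
    assume "Pp \<noteq> {}"
    have "0 < (\<Sum>\<gamma>\<in>Pp. c \<gamma> * (\<gamma> \<bullet> x0))"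
      using fP \<open>Pp \<noteq> {}\<close> by (intro sum_pos) (auto simp: Pp_def intro!: mult_pos_pos B_x0)
    also have "\<dots> = v \<bullet> x0" unfolding v_def by (simp add: inner_sum_left)
    finally show False using v0 by simp
  qed
  moreover have "Nn = {}"
  proof (rule ccontr)
    assume "Nn \<noteq> {}"
    have "0 < (\<Sum>\<gamma>\<in>Nn. (- c \<gamma>) * (\<gamma> \<bullet> x0))"
      using fN \<open>Nn \<noteq> {}\<close> by (intro sum_pos) (auto simp: Nn_def intro!: mult_neg_pos B_x0)
    also have "\<dots> = w \<bullet> x0" unfolding w_def by (simp add: inner_sum_left)
    finally show False using w0 by simp
  qed
  ultimately have "\<not> 0 < c \<gamma>" "\<not> c \<gamma> < 0" using g by (auto simp: Pp_def Nn_def)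
  then show ?thesis by linarith
qed

definition rep :: "'a \<Rightarrow> ('a \<Rightarrow> real) \<Rightarrow> bool" where
  "rep \<alpha> c \<longleftrightarrow> \<alpha> = (\<Sum>\<gamma>\<in>B. c \<gamma> *\<^sub>R \<gamma>)"

lemma rep_unique: "rep \<alpha> c \<Longrightarrow> rep \<alpha> d \<Longrightarrow> \<gamma> \<in> B \<Longrightarrow> c \<gamma> = d \<gamma>"
proof -
  assume "rep \<alpha> c" "rep \<alpha> d" "\<gamma> \<in> B"
  then have "(\<Sum>\<gamma>\<in>B. (c \<gamma> - d \<gamma>) *\<^sub>R \<gamma>) = 0"
    by (simp add: rep_def scaleR_diff_left sum_subtractf)
  from indep[OF this \<open>\<gamma> \<in> B\<close>] show ?thesis by simp
qed

lemma rep_add: "rep \<alpha> c \<Longrightarrow> rep \<beta> d \<Longrightarrow> rep (\<alpha> + \<beta>) (\<lambda>\<gamma>. c \<gamma> + d \<gamma>)"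
  by (simp add: rep_def scaleR_add_left sum.distrib)

lemma rep_uminus: "rep \<alpha> c \<Longrightarrow> rep (- \<alpha>) (\<lambda>\<gamma>. - c \<gamma>)"
  by (simp add: rep_def sum_negf)

lemma rep_simple: assumes "\<alpha> \<in> B" shows "rep \<alpha> (\<lambda>\<gamma>. if \<gamma> = \<alpha> then 1 else 0)"
proof -
  have "(\<Sum>\<gamma>\<in>B. (if \<gamma> = \<alpha> then 1 else 0) *\<^sub>R \<gamma>) = (\<Sum>\<gamma>\<in>B. if \<gamma> = \<alpha> then \<alpha> else 0)"
    by (rule sum.cong) auto
  also have "\<dots> = \<alpha>" using finB assms by (simp add: sum.delta')
  finally show ?thesis unfolding rep_def by simp
qed

lemma pos_rep: "\<alpha> \<in> P \<Longrightarrow> \<exists>c. rep \<alpha> c \<and> (\<forall>\<gamma>. 0 \<le> c \<gamma>)"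
proof -
  assume "\<alpha> \<in> P"
  then have "\<alpha> \<in> R" using P_sub by auto
  then show ?thesis using \<open>\<alpha> \<in> P\<close>
  proof (induction \<alpha> rule: x0_induct)
    case (step \<alpha>)
    show ?case
    proof (cases "\<alpha> \<in> B")
      case True
      then show ?thesis using rep_simple[OF True] by (intro exI[of _ "\<lambda>\<gamma>. if \<gamma> = \<alpha> then 1 else 0"]) auto
    next
      case False
      then obtain \<beta> \<gamma> where bg: "\<beta> \<in> P" "\<gamma> \<in> P" "\<alpha> = \<beta> + \<gamma>"
        using step(3) unfolding simple_roots_def by auto
      have lt: "\<beta> \<bullet> x0 < \<alpha> \<bullet> x0" "\<gamma> \<bullet> x0 < \<alpha> \<bullet> x0" using bg by (auto simp: pos_eq inner_add_left)
      have "\<exists>c. rep \<beta> c \<and> (\<forall>\<gamma>. 0 \<le> c \<gamma>)" by (rule step(2)) (use bg lt P_sub in auto)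
      moreover have "\<exists>c. rep \<gamma> c \<and> (\<forall>\<gamma>. 0 \<le> c \<gamma>)" by (rule step(2)) (use bg lt P_sub in auto)
      ultimately obtain c d where "rep \<beta> c" "\<forall>\<gamma>. 0 \<le> c \<gamma>" "rep \<gamma> d" "\<forall>\<gamma>. 0 \<le> d \<gamma>"
        by blast
      then show ?thesis using rep_add bg(3) by (intro exI[of _ "\<lambda>\<delta>. c \<delta> + d \<delta>"]) auto
    qed
  qed
qed

definition coef :: "'a \<Rightarrow> 'a \<Rightarrow> real" where
  "coef \<alpha> = (SOME c. rep \<alpha> c)"

lemma R_rep: assumes "\<alpha> \<in> R" shows "\<exists>c. rep \<alpha> c"
proof (cases "\<alpha> \<in> P")
  case True then show ?thesis using pos_rep by blast
next
  case False
  then have "- \<alpha> \<in> P" using R_split[OF assms] N_negP by blast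
  then obtain c where "rep (- \<alpha>) c" using pos_rep by blast
  then have "rep (- (- \<alpha>)) (\<lambda>\<gamma>. - c \<gamma>)" by (rule rep_uminus)
  then show ?thesis by auto
qed

lemma coef_rep: "\<alpha> \<in> R \<Longrightarrow> rep \<alpha> (coef \<alpha>)"
  unfolding coef_def using R_rep by (rule someI_ex)

lemma coef_eq: "rep \<alpha> c \<Longrightarrow> \<gamma> \<in> B \<Longrightarrow> coef \<alpha> \<gamma> = c \<gamma>"
proof -
  assume r: "rep \<alpha> c" and g: "\<gamma> \<in> B"
  have "rep \<alpha> (SOME c. rep \<alpha> c)" by (rule someI[of "rep \<alpha>" c, OF r])
  then show ?thesis unfolding coef_def using rep_unique[OF _ r g] by blast
qed

lemma coef_pos: "\<alpha> \<in> P \<Longrightarrow> \<gamma> \<in> B \<Longrightarrow> 0 \<le> coef \<alpha> \<gamma>"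
proof -
  assume a: "\<alpha> \<in> P" "\<gamma> \<in> B"
  obtain c where "rep \<alpha> c" "\<forall>\<gamma>. 0 \<le> c \<gamma>" using pos_rep a by blast
  then show ?thesis using coef_eq[of \<alpha> c \<gamma>] a by simp
qed

lemma coef_neg: "\<alpha> \<in> N \<Longrightarrow> \<gamma> \<in> B \<Longrightarrow> coef \<alpha> \<gamma> \<le> 0"
proof -
  assume a: "\<alpha> \<in> N" "\<gamma> \<in> B"
  obtain c where "rep (-\<alpha>) c" "\<forall>\<gamma>. 0 \<le> c \<gamma>" using pos_rep N_negP a by blast
  then have "rep \<alpha> (\<lambda>\<gamma>. - c \<gamma>)" using rep_uminus by fastforce
  then show ?thesis using coef_eq a \<open>\<forall>\<gamma>. 0 \<le> c \<gamma>\<close> by fastforce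
qed

lemma coef_add: "\<alpha> \<in> R \<Longrightarrow> \<beta> \<in> R \<Longrightarrow> \<gamma> \<in> B \<Longrightarrow> coef (\<alpha> + \<beta>) \<gamma> = coef \<alpha> \<gamma> + coef \<beta> \<gamma>"
  using coef_eq rep_add coef_rep by blast

lemma coef_uminus: "\<alpha> \<in> R \<Longrightarrow> \<gamma> \<in> B \<Longrightarrow> coef (- \<alpha>) \<gamma> = - coef \<alpha> \<gamma>"
  using coef_eq rep_uminus coef_rep by blast

lemma coef_simple: "\<alpha> \<in> B \<Longrightarrow> \<gamma> \<in> B \<Longrightarrow> coef \<alpha> \<gamma> = (if \<gamma> = \<alpha> then 1 else 0)"
  using coef_eq rep_simple by blast

lemma supp_eq: assumes a: "\<alpha> \<in> R" shows "supp R C \<alpha> = {\<gamma>\<in>B. coef \<alpha> \<gamma> \<noteq> 0}"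
proof
  show "supp R C \<alpha> \<subseteq> {\<gamma>\<in>B. coef \<alpha> \<gamma> \<noteq> 0}"
  proof
    fix x assume "x \<in> supp R C \<alpha>"
    then obtain c where "x \<in> B" "rep \<alpha> c" "c x \<noteq> 0" unfolding supp_def rep_def by blast
    then show "x \<in> {\<gamma>\<in>B. coef \<alpha> \<gamma> \<noteq> 0}" using coef_eq[of \<alpha> c x] by simp
  qed
  show "{\<gamma>\<in>B. coef \<alpha> \<gamma> \<noteq> 0} \<subseteq> supp R C \<alpha>"
    using coef_rep[OF a] unfolding supp_def rep_def by blast
qed

lemma supp_uminus: "\<alpha> \<in> R \<Longrightarrow> supp R C (- \<alpha>) = supp R C \<alpha>"
  using supp_eq coef_uminus neg_in by auto

lemma chain:
  assumes a: "\<alpha> \<in> P" and nb: "\<alpha> \<notin> B"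
  shows "\<exists>\<gamma>\<in>B. \<alpha> - \<gamma> \<in> P"
proof -
  have aR: "\<alpha> \<in> R" using a P_sub by auto
  have "0 < \<alpha> \<bullet> \<alpha>" using sq_pos aR by simp
  also have "\<alpha> \<bullet> \<alpha> = \<alpha> \<bullet> (\<Sum>\<gamma>\<in>B. coef \<alpha> \<gamma> *\<^sub>R \<gamma>)"
    using coef_rep[OF aR] unfolding rep_def by simp
  also have "\<dots> = (\<Sum>\<gamma>\<in>B. coef \<alpha> \<gamma> * (\<alpha> \<bullet> \<gamma>))"
    by (simp only: inner_sum_right inner_scaleR_right)
  finally have "\<exists>\<gamma>\<in>B. 0 < coef \<alpha> \<gamma> * (\<alpha> \<bullet> \<gamma>)"
    using sum_nonpos[of B "\<lambda>\<gamma>. coef \<alpha> \<gamma> * (\<alpha> \<bullet> \<gamma>)"] by (meson not_le)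
  then obtain \<gamma> where g: "\<gamma> \<in> B" "0 < coef \<alpha> \<gamma> * (\<alpha> \<bullet> \<gamma>)" by blast
  have "0 \<le> coef \<alpha> \<gamma>" using coef_pos a g by simp
  then have ip: "0 < \<alpha> \<bullet> \<gamma>" using g(2) mult_nonneg_nonpos[of "coef \<alpha> \<gamma>" "\<alpha> \<bullet> \<gamma>"] by linarith
  have gR: "\<gamma> \<in> R" using g B_sub P_sub by auto
  have ne: "\<alpha> \<noteq> \<gamma>" using nb g by auto
  have d: "\<alpha> - \<gamma> \<in> R" using diff_root[OF aR gR ip ne] .
  show ?thesis
  proof (cases "\<alpha> - \<gamma> \<in> P")
    case True then show ?thesis using g by blast
  next
    case False
    then have "\<gamma> - \<alpha> \<in> P" using R_split[OF d] N_negP by force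
    moreover have "\<not> (\<exists>x\<in>P. \<exists>y\<in>P. \<gamma> = x + y)" using g unfolding simple_roots_def by auto
    moreover have "\<gamma> = (\<gamma> - \<alpha>) + \<alpha>" by simp
    ultimately show ?thesis using a by blast
  qed
qed

lemma L2:
  assumes cl: "closed_subset R Q'" and PQ: "P \<subseteq> Q'"
  shows "\<delta> \<in> P \<Longrightarrow> - \<delta> \<in> Q' \<Longrightarrow> \<gamma> \<in> supp R C \<delta> \<Longrightarrow> - \<gamma> \<in> Q'"
proof -
  assume "\<delta> \<in> P"
  then have "\<delta> \<in> R" using P_sub by auto
  then show "\<delta> \<in> P \<Longrightarrow> - \<delta> \<in> Q' \<Longrightarrow> \<gamma> \<in> supp R C \<delta> \<Longrightarrow> - \<gamma> \<in> Q'"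
  proof (induction \<delta> arbitrary: \<gamma> rule: x0_induct)
    case (step \<delta>)
    have clo: "\<And>x y. x \<in> Q' \<Longrightarrow> y \<in> Q' \<Longrightarrow> x + y \<in> R \<Longrightarrow> x + y \<in> Q'"
      using cl unfolding closed_subset_def by blast
    show ?case
    proof (cases "\<delta> \<in> B")
      case True
      then have "\<gamma> = \<delta>" using step(1,5) supp_eq coef_simple by (auto split: if_splits)
      then show ?thesis using step(4) by simp
    next
      case False
      then obtain g where g: "g \<in> B" "\<delta> - g \<in> P" using chain step(3) by blast
      define \<beta> where "\<beta> = \<delta> - g"
      have gR: "g \<in> R" and bR: "\<beta> \<in> R" using g B_sub P_sub by (auto simp: \<beta>_def)
      have "- g = - \<delta> + \<beta>" by (simp add: \<beta>_def)
      then have mg: "- g \<in> Q'" using clo[of "-\<delta>" \<beta>] step(4) g PQ neg_in[OF gR] by (auto simp: \<beta>_def)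
      have "- \<beta> = - \<delta> + g" by (simp add: \<beta>_def)
      then have mb: "- \<beta> \<in> Q'" using clo[of "-\<delta>" g] step(4) g PQ B_sub neg_in[OF bR] by auto
      have lt: "\<beta> \<bullet> x0 < \<delta> \<bullet> x0" using B_x0[OF g(1)] by (simp add: \<beta>_def inner_diff_left)
      have dec: "\<delta> = \<beta> + g" by (simp add: \<beta>_def)
      have gs: "\<gamma> \<in> B" "coef \<delta> \<gamma> \<noteq> 0" using step(1,5) supp_eq by auto
      show ?thesis
      proof (cases "\<gamma> = g")
        case True then show ?thesis using mg by simp
      next
        case False
        have "coef \<delta> \<gamma> = coef \<beta> \<gamma> + coef g \<gamma>" using dec coef_add bR gR gs by simp
        also have "coef g \<gamma> = 0" using coef_simple g gs False by simp
        finally have "\<gamma> \<in> supp R C \<beta>" using gs supp_eq[OF bR] by simp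
        then show ?thesis using step(2)[OF bR lt _ mb] g(2) unfolding \<beta>_def by blast
      qed
    qed
  qed
qed

lemma L3:
  assumes cl: "closed_subset R Q'" and PQ: "P \<subseteq> Q'"
  shows "\<delta> \<in> P \<Longrightarrow> (\<forall>\<gamma>\<in>supp R C \<delta>. - \<gamma> \<in> Q') \<Longrightarrow> - \<delta> \<in> Q'"
proof -
  assume "\<delta> \<in> P"
  then have "\<delta> \<in> R" using P_sub by auto
  then show "\<delta> \<in> P \<Longrightarrow> (\<forall>\<gamma>\<in>supp R C \<delta>. - \<gamma> \<in> Q') \<Longrightarrow> - \<delta> \<in> Q'"
  proof (induction \<delta> rule: x0_induct)
    case (step \<delta>)
    have clo: "\<And>x y. x \<in> Q' \<Longrightarrow> y \<in> Q' \<Longrightarrow> x + y \<in> R \<Longrightarrow> x + y \<in> Q'"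
      using cl unfolding closed_subset_def by blast
    show ?case
    proof (cases "\<delta> \<in> B")
      case True
      then have "\<delta> \<in> supp R C \<delta>" using step(1) supp_eq coef_simple by auto
      then show ?thesis using step(4) by simp
    next
      case False
      then obtain g where g: "g \<in> B" "\<delta> - g \<in> P" using chain step(3) by blast
      define \<beta> where "\<beta> = \<delta> - g"
      have gR: "g \<in> R" and bR: "\<beta> \<in> R" and bP: "\<beta> \<in> P" using g B_sub P_sub by (auto simp: \<beta>_def)
      have lt: "\<beta> \<bullet> x0 < \<delta> \<bullet> x0" using B_x0[OF g(1)] by (simp add: \<beta>_def inner_diff_left)
      have dec: "\<delta> = \<beta> + g" by (simp add: \<beta>_def)
      have cd: "\<And>x. x \<in> B \<Longrightarrow> coef \<delta> x = coef \<beta> x + (if x = g then 1 else 0)"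
        using dec coef_add bR gR coef_simple g by simp
      have "g \<in> supp R C \<delta>" using cd[OF g(1)] coef_pos[OF bP g(1)] supp_eq step(1) g by auto
      then have mg: "- g \<in> Q'" using step(4) by blast
      have "supp R C \<beta> \<subseteq> supp R C \<delta>"
      proof
        fix x assume "x \<in> supp R C \<beta>"
        then have x: "x \<in> B" "coef \<beta> x \<noteq> 0" using supp_eq bR by auto
        then have "0 < coef \<beta> x" using coef_pos[OF bP x(1)] by simp
        then have "coef \<delta> x \<noteq> 0" using cd[OF x(1)] by auto
        then show "x \<in> supp R C \<delta>" using supp_eq step(1) x by auto
      qed
      then have mb: "- \<beta> \<in> Q'" using step(2)[OF bR lt bP] step(4) by blast
      have e: "- \<delta> = - \<beta> + - g" by (simp add: dec)
      have "- \<delta> \<in> R" using neg_in step(1) by blast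
      then have "- \<beta> + - g \<in> R" unfolding e .
      then show ?thesis unfolding e by (rule clo[OF mb mg])
    qed
  qed
qed

end

lemma chamber_setup:
  assumes rrs: "reduced_root_system R" and wc: "weyl_chamber R C"
  shows "\<exists>x0. RS R C x0"
proof -
  obtain x where x: "x \<notin> root_hyperplanes R" "C = connected_component_set (- root_hyperplanes R) x"
    using wc unfolding weyl_chamber_def by blast
  have xC: "x \<in> C" using x by simp
  have Csub: "C \<subseteq> - root_hyperplanes R" using x(2) connected_component_subset by blast
  have conn: "connected C" using x(2) by simp
  have nzC: "\<And>\<alpha> y. \<alpha>\<in>R \<Longrightarrow> y\<in>C \<Longrightarrow> \<alpha> \<bullet> y \<noteq> 0"
    using Csub unfolding root_hyperplanes_def by blast
  have same: "0 < \<alpha> \<bullet> y \<longleftrightarrow> 0 < \<alpha> \<bullet> x" if a: "\<alpha>\<in>R" "y\<in>C" for \<alpha> y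
  proof (rule ccontr)
    assume h: "\<not> (0 < \<alpha> \<bullet> y \<longleftrightarrow> 0 < \<alpha> \<bullet> x)"
    have "\<alpha> \<bullet> y \<noteq> 0" "\<alpha> \<bullet> x \<noteq> 0" using nzC a xC by auto
    then have "(\<alpha> \<bullet> y \<le> 0 \<and> 0 \<le> \<alpha> \<bullet> x) \<or> (\<alpha> \<bullet> x \<le> 0 \<and> 0 \<le> \<alpha> \<bullet> y)" using h by linarith
    then have "\<exists>z\<in>C. \<alpha> \<bullet> z = 0"
    proof
      assume "\<alpha> \<bullet> y \<le> 0 \<and> 0 \<le> \<alpha> \<bullet> x"
      then show ?thesis using connected_ivt_hyperplane[OF conn a(2) xC, of \<alpha> 0] by simp
    next
      assume "\<alpha> \<bullet> x \<le> 0 \<and> 0 \<le> \<alpha> \<bullet> y"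
      then show ?thesis using connected_ivt_hyperplane[OF conn xC a(2), of \<alpha> 0] by simp
    qed
    then show False using nzC a by blast
  qed
  have "RS R C x"
  proof
    show "reduced_root_system R" by (rule rrs)
    show "pos_roots R C = {\<alpha> \<in> R. 0 < \<alpha> \<bullet> x}"
      unfolding pos_roots_def using same xC by blast
    show "neg_roots R C = {\<alpha> \<in> R. \<alpha> \<bullet> x < 0}"
    proof -
      have "(\<forall>y\<in>C. \<alpha> \<bullet> y < 0) \<longleftrightarrow> \<alpha> \<bullet> x < 0" if "\<alpha> \<in> R" for \<alpha>
      proof
        assume "\<forall>y\<in>C. \<alpha> \<bullet> y < 0" then show "\<alpha> \<bullet> x < 0" using xC by blast
      next
        assume ax: "\<alpha> \<bullet> x < 0"
        show "\<forall>y\<in>C. \<alpha> \<bullet> y < 0"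
        proof
          fix y assume "y \<in> C"
          then have "\<not> 0 < \<alpha> \<bullet> y" "\<alpha> \<bullet> y \<noteq> 0" using same[OF that] nzC[OF that] ax by auto
          then show "\<alpha> \<bullet> y < 0" by linarith
        qed
      qed
      then show ?thesis unfolding neg_roots_def by blast
    qed
    show "\<And>\<alpha>. \<alpha> \<in> R \<Longrightarrow> \<alpha> \<bullet> x \<noteq> 0" using nzC xC by blast
  qed
  then show ?thesis by blast
qed

theorem theorem2p31:
  fixes R :: "'a::euclidean_space set" and Q C :: "'a set" and s :: "'a \<Rightarrow> 'a"
  assumes "reduced_root_system R"
    and "parabolic R Q"
    and "weyl_chamber R C"
    and "pos_roots R C \<subseteq> Q"
    and "root_involution R s"
  defines "\<Phi> \<equiv> simple_roots R C \<inter> nilpart Q"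
  defines "\<Phi>v \<equiv> simple_roots R C - \<Phi>"
  defines "\<Phi>p \<equiv> {\<alpha>\<in>\<Phi>. s \<alpha> \<in> pos_roots R C}"
  defines "\<Phi>m \<equiv> {\<alpha>\<in>\<Phi>. s \<alpha> \<in> neg_roots R C}"
  defines "\<Psi> \<equiv> {\<alpha>\<in>\<Phi>p. s \<alpha> \<in> nilpart Q \<and> \<alpha> \<notin> (\<Union>\<beta>\<in>\<Phi>v \<union> \<Phi>m. supp R C (s \<beta>))}"
  shows "parabolic R (Q_of R C \<Psi>)
         \<and> Q \<union> s ` Q \<subseteq> Q_of R C \<Psi>
         \<and> (\<forall>Q'. closed_subset R Q' \<and> Q \<union> s ` Q \<subseteq> Q' \<longrightarrow> Q_of R C \<Psi> \<subseteq> Q')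
         \<and> closed_hull R (Q \<union> s ` Q) = Q_of R C \<Psi>
         \<and> totally_real (Q_of R C \<Psi>) s
         \<and> (fundamental R Q s \<longleftrightarrow> \<Psi> = {})"
proof -
  obtain x0 where "RS R C x0" using chamber_setup assms(1,3) by blast
  interpret RS R C x0 by fact
  have Qcl: "closed_subset R Q" and QU: "Q \<union> uminus ` Q = R"
    using assms(2) unfolding parabolic_def by auto
  have QR: "Q \<subseteq> R" using Qcl unfolding closed_subset_def by blast
  have PQ: "pos_roots R C \<subseteq> Q" by (rule assms(4))
  have lin: "linear s" and ss: "\<And>x. s (s x) = x" and sR: "s ` R = R"
    using assms(5) unfolding root_involution_def by auto
  have sRin: "\<And>\<alpha>. \<alpha> \<in> R \<Longrightarrow> s \<alpha> \<in> R" using sR by blast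
  have sneg: "\<And>x. s (- x) = - s x" using linear_neg[OF lin] by blast
  have sadd: "\<And>x y. s (x + y) = s x + s y" using linear_add[OF lin] by blast
  have nilQ: "\<And>\<gamma>. \<gamma> \<in> nilpart Q \<longleftrightarrow> \<gamma> \<in> Q \<and> - \<gamma> \<notin> Q" unfolding nilpart_def by blast
  have PhiB: "\<Phi> \<subseteq> simple_roots R C" unfolding \<Phi>_def by blast
  have PsiPhi: "\<Psi> \<subseteq> \<Phi>" unfolding \<Psi>_def \<Phi>p_def by blast
  have PsiB: "\<Psi> \<subseteq> simple_roots R C" using PsiPhi PhiB by blast
  have BR: "simple_roots R C \<subseteq> R" using B_sub P_sub by blast
  have BQ: "simple_roots R C \<subseteq> Q" using B_sub PQ by blast

  have Qcoef: "0 \<le> coef \<alpha> \<gamma>" if a: "\<alpha> \<in> Q" "\<gamma> \<in> \<Phi>" for \<alpha> \<gamma>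
  proof -
    have aR: "\<alpha> \<in> R" using a QR by blast
    have gB: "\<gamma> \<in> simple_roots R C" using a PhiB by blast
    show ?thesis
    proof (cases "\<alpha> \<in> pos_roots R C")
      case True then show ?thesis using coef_pos gB by blast
    next
      case False
      then have aN: "\<alpha> \<in> neg_roots R C" using R_split aR by blast
      show ?thesis
      proof (rule ccontr)
        assume "\<not> 0 \<le> coef \<alpha> \<gamma>"
        then have "\<gamma> \<in> supp R C \<alpha>" using supp_eq[OF aR] gB by auto
        then have gs: "\<gamma> \<in> supp R C (- \<alpha>)" using supp_uminus[OF aR] by simp
        have "- (- \<alpha>) \<in> Q" using a by simp
        from L2[OF Qcl PQ N_negP[OF aN] this gs] have "- \<gamma> \<in> Q" .
        then show False using a(2) nilQ unfolding \<Phi>_def by blast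
      qed
    qed
  qed

  define QP where "QP = Q_of R C \<Psi>"
  have QPR: "QP \<subseteq> R" unfolding QP_def Q_of_def using P_sub N_sub by blast
  have memQ: "\<alpha> \<in> QP \<longleftrightarrow> (\<forall>\<psi>\<in>\<Psi>. 0 \<le> coef \<alpha> \<psi>)" if aR: "\<alpha> \<in> R" for \<alpha>
  proof (cases "\<alpha> \<in> pos_roots R C")
    case True
    then show ?thesis unfolding QP_def Q_of_def using coef_pos PsiB by blast
  next
    case False
    then have aN: "\<alpha> \<in> neg_roots R C" using R_split aR by blast
    have "\<alpha> \<in> QP \<longleftrightarrow> supp R C \<alpha> \<inter> \<Psi> = {}" unfolding QP_def Q_of_def using False aN by blast
    also have "\<dots> \<longleftrightarrow> (\<forall>\<psi>\<in>\<Psi>. coef \<alpha> \<psi> = 0)" using supp_eq[OF aR] PsiB by blast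
    also have "\<dots> \<longleftrightarrow> (\<forall>\<psi>\<in>\<Psi>. 0 \<le> coef \<alpha> \<psi>)"
    proof (intro iffI ballI)
      fix \<psi> assume "\<forall>\<psi>\<in>\<Psi>. coef \<alpha> \<psi> = 0" "\<psi> \<in> \<Psi>" then show "0 \<le> coef \<alpha> \<psi>" by simp
    next
      fix \<psi> assume h: "\<forall>\<psi>\<in>\<Psi>. 0 \<le> coef \<alpha> \<psi>" and p: "\<psi> \<in> \<Psi>"
      have "coef \<alpha> \<psi> \<le> 0" using coef_neg[OF aN] PsiB p by blast
      moreover have "0 \<le> coef \<alpha> \<psi>" using h p by blast
      ultimately show "coef \<alpha> \<psi> = 0" by linarith
    qed
    finally show ?thesis .
  qed
  have PQP: "pos_roots R C \<subseteq> QP" unfolding QP_def Q_of_def by blast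

  have QPcl: "closed_subset R QP"
    unfolding closed_subset_def
  proof (intro conjI ballI impI)
    show "QP \<subseteq> R" by (rule QPR)
    fix \<alpha> \<beta> assume ab: "\<alpha> \<in> QP" "\<beta> \<in> QP" "\<alpha> + \<beta> \<in> R"
    have aR: "\<alpha> \<in> R" and bR: "\<beta> \<in> R" using ab QPR by auto
    show "\<alpha> + \<beta> \<in> QP"
      unfolding memQ[OF ab(3)]
    proof
      fix \<psi> assume p: "\<psi> \<in> \<Psi>"
      then have "coef (\<alpha> + \<beta>) \<psi> = coef \<alpha> \<psi> + coef \<beta> \<psi>" using coef_add aR bR PsiB by blast
      moreover have "0 \<le> coef \<alpha> \<psi>" "0 \<le> coef \<beta> \<psi>" using ab(1,2) memQ aR bR p by auto
      ultimately show "0 \<le> coef (\<alpha> + \<beta>) \<psi>" by simp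
    qed
  qed
  have QPpar: "parabolic R QP"
    unfolding parabolic_def
  proof (intro conjI QPcl equalityI subsetI)
    fix \<alpha> assume "\<alpha> \<in> QP \<union> uminus ` QP"
    then show "\<alpha> \<in> R" using QPR neg_in by auto
  next
    fix \<alpha> assume aR: "\<alpha> \<in> R"
    show "\<alpha> \<in> QP \<union> uminus ` QP"
    proof (cases "\<alpha> \<in> pos_roots R C")
      case True then show ?thesis using PQP by blast
    next
      case False
      then have "- \<alpha> \<in> pos_roots R C" using R_split aR N_negP by blast
      then have "- \<alpha> \<in> QP" using PQP by blast
      then have "- (- \<alpha>) \<in> uminus ` QP" by blast
      then show ?thesis by simp
    qed
  qed

  have QsubQP: "Q \<subseteq> QP"
  proof
    fix \<alpha> assume a: "\<alpha> \<in> Q"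
    then have aR: "\<alpha> \<in> R" using QR by blast
    show "\<alpha> \<in> QP" unfolding memQ[OF aR] using Qcoef a PsiPhi by blast
  qed

  have sQsubQP: "s ` Q \<subseteq> QP"
  proof
    fix x assume "x \<in> s ` Q"
    then obtain \<alpha> where a: "\<alpha> \<in> Q" and x: "x = s \<alpha>" by blast
    have aR: "\<alpha> \<in> R" using a QR by blast
    have saR: "s \<alpha> \<in> R" using sRin aR by blast
    have rs: "rep (s \<alpha>) (\<lambda>\<psi>. \<Sum>\<gamma>\<in>simple_roots R C. coef \<alpha> \<gamma> * coef (s \<gamma>) \<psi>)"
    proof -
      have "s \<alpha> = s (\<Sum>\<gamma>\<in>simple_roots R C. coef \<alpha> \<gamma> *\<^sub>R \<gamma>)"
        using coef_rep[OF aR] unfolding rep_def by simp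
      also have "\<dots> = (\<Sum>\<gamma>\<in>simple_roots R C. coef \<alpha> \<gamma> *\<^sub>R s \<gamma>)"
        by (simp add: linear_sum[OF lin] linear_scale[OF lin])
      also have "\<dots> = (\<Sum>\<gamma>\<in>simple_roots R C. coef \<alpha> \<gamma> *\<^sub>R (\<Sum>\<psi>\<in>simple_roots R C. coef (s \<gamma>) \<psi> *\<^sub>R \<psi>))"
      proof (rule sum.cong[OF refl])
        fix \<gamma> assume "\<gamma> \<in> simple_roots R C"
        then have "s \<gamma> \<in> R" using BR sRin by blast
        then show "coef \<alpha> \<gamma> *\<^sub>R s \<gamma> = coef \<alpha> \<gamma> *\<^sub>R (\<Sum>\<psi>\<in>simple_roots R C. coef (s \<gamma>) \<psi> *\<^sub>R \<psi>)"
          using coef_rep unfolding rep_def by metis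
      qed
      also have "\<dots> = (\<Sum>\<gamma>\<in>simple_roots R C. \<Sum>\<psi>\<in>simple_roots R C. (coef \<alpha> \<gamma> * coef (s \<gamma>) \<psi>) *\<^sub>R \<psi>)"
        by (simp add: scaleR_sum_right)
      also have "\<dots> = (\<Sum>\<psi>\<in>simple_roots R C. \<Sum>\<gamma>\<in>simple_roots R C. (coef \<alpha> \<gamma> * coef (s \<gamma>) \<psi>) *\<^sub>R \<psi>)"
        by (rule sum.swap)
      also have "\<dots> = (\<Sum>\<psi>\<in>simple_roots R C. (\<Sum>\<gamma>\<in>simple_roots R C. coef \<alpha> \<gamma> * coef (s \<gamma>) \<psi>) *\<^sub>R \<psi>)"
        by (simp add: scaleR_sum_left)
      finally show ?thesis unfolding rep_def .
    qed
    show "x \<in> QP" unfolding x memQ[OF saR]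
    proof
      fix \<psi> assume p: "\<psi> \<in> \<Psi>"
      then have pB: "\<psi> \<in> simple_roots R C" using PsiB by blast
      have "coef (s \<alpha>) \<psi> = (\<Sum>\<gamma>\<in>simple_roots R C. coef \<alpha> \<gamma> * coef (s \<gamma>) \<psi>)"
        using coef_eq[OF rs pB] .
      also have "\<dots> \<ge> 0"
      proof (rule sum_nonneg)
        fix \<gamma> assume gB: "\<gamma> \<in> simple_roots R C"
        have sgR: "s \<gamma> \<in> R" using gB BR sRin by blast
        show "0 \<le> coef \<alpha> \<gamma> * coef (s \<gamma>) \<psi>"
        proof (cases "\<gamma> \<in> \<Phi> \<and> s \<gamma> \<in> pos_roots R C")
          case True
          then show ?thesis using Qcoef[OF a] coef_pos pB by simp
        next
          case False
          then have "\<gamma> \<in> \<Phi>v \<union> \<Phi>m" unfolding \<Phi>v_def \<Phi>m_def using gB R_split[OF sgR] by blast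
          then have "\<psi> \<notin> supp R C (s \<gamma>)" using p unfolding \<Psi>_def by blast
          then have "coef (s \<gamma>) \<psi> = 0" using supp_eq[OF sgR] pB by blast
          then show ?thesis by simp
        qed
      qed
      finally show "0 \<le> coef (s \<alpha>) \<psi>" .
    qed
  qed

  have L2neg: "- \<gamma> \<in> Q'" if "closed_subset R Q'" "pos_roots R C \<subseteq> Q'" "\<epsilon> \<in> neg_roots R C"
      "\<epsilon> \<in> Q'" "\<gamma> \<in> supp R C \<epsilon>" for Q' \<epsilon> \<gamma>
  proof -
    have eR: "\<epsilon> \<in> R" using that N_sub by blast
    have "- (- \<epsilon>) \<in> Q'" using that by simp
    moreover have "\<gamma> \<in> supp R C (- \<epsilon>)" using that supp_uminus[OF eR] by simp
    ultimately show ?thesis using L2[OF that(1,2) N_negP[OF that(3)]] by blast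
  qed

  have minimal: "QP \<subseteq> Q'" if cl: "closed_subset R Q'" and sub: "Q \<union> s ` Q \<subseteq> Q'" for Q'
  proof
    have PQ': "pos_roots R C \<subseteq> Q'" using PQ sub by blast
    fix \<alpha> assume aQP: "\<alpha> \<in> QP"
    show "\<alpha> \<in> Q'"
    proof (cases "\<alpha> \<in> pos_roots R C")
      case True then show ?thesis using PQ' by blast
    next
      case False
      then have aN: "\<alpha> \<in> neg_roots R C" and sPsi: "supp R C \<alpha> \<inter> \<Psi> = {}"
        using aQP unfolding QP_def Q_of_def by auto
      have aR: "\<alpha> \<in> R" using aN N_sub by blast
      have key: "- \<gamma> \<in> Q'" if gs: "\<gamma> \<in> supp R C \<alpha>" for \<gamma>
      proof -
        have gB: "\<gamma> \<in> simple_roots R C" using gs supp_eq[OF aR] by blast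
        have gR: "\<gamma> \<in> R" using gB BR by blast
        have gQ: "\<gamma> \<in> Q" using gB BQ by blast
        have gPsi: "\<gamma> \<notin> \<Psi>" using gs sPsi by blast
        have sgR: "s \<gamma> \<in> R" using sRin gR by blast
        show ?thesis
        proof (cases "\<gamma> \<in> \<Phi>")
          case False
          then have "- \<gamma> \<in> Q" using gQ gB nilQ unfolding \<Phi>_def by blast
          then show ?thesis using sub by blast
        next
          case gPhi: True
          show ?thesis
          proof (cases "s \<gamma> \<in> pos_roots R C")
            case False
            then have "s \<gamma> \<in> neg_roots R C" using R_split[OF sgR] by blast
            then have "- s \<gamma> \<in> Q" using N_negP PQ by blast
            then have "s (- s \<gamma>) \<in> s ` Q" by blast
            then have "- \<gamma> \<in> s ` Q" using sneg ss by simp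
            then show ?thesis using sub by blast
          next
            case sgP: True
            show ?thesis
            proof (cases "s \<gamma> \<in> nilpart Q")
              case False
              then have "- s \<gamma> \<in> Q" using sgP PQ nilQ by blast
              then have "s (- s \<gamma>) \<in> s ` Q" by blast
              then have "- \<gamma> \<in> s ` Q" using sneg ss by simp
              then show ?thesis using sub by blast
            next
              case True
              have "\<gamma> \<in> \<Phi>p" unfolding \<Phi>p_def using gPhi sgP by blast
              then obtain \<beta> where b: "\<beta> \<in> \<Phi>v \<union> \<Phi>m" and gsb: "\<gamma> \<in> supp R C (s \<beta>)"
                using gPsi True unfolding \<Psi>_def by blast
              have bB: "\<beta> \<in> simple_roots R C" using b unfolding \<Phi>v_def \<Phi>m_def \<Phi>_def by blast
              have bR: "\<beta> \<in> R" using bB BR by blast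
              have sbR: "s \<beta> \<in> R" using sRin bR by blast
              have sbQ': "s \<beta> \<in> Q'" using bB BQ sub by blast
              show ?thesis
              proof (cases "\<beta> \<in> \<Phi>v")
                case True
                then have "- \<beta> \<in> Q" using bB BQ nilQ unfolding \<Phi>v_def \<Phi>_def by blast
                then have "s (- \<beta>) \<in> Q'" using sub by blast
                then have msb: "- s \<beta> \<in> Q'" using sneg by simp
                show ?thesis
                proof (cases "s \<beta> \<in> neg_roots R C")
                  case True
                  show ?thesis by (rule L2neg[OF cl PQ' True sbQ' gsb])
                next
                  case False
                  then have "s \<beta> \<in> pos_roots R C" using R_split[OF sbR] by blast
                  then have "- s \<beta> \<in> neg_roots R C" by (rule P_negN)
                  moreover have "\<gamma> \<in> supp R C (- s \<beta>)" using gsb supp_uminus[OF sbR] by simp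
                  ultimately show ?thesis using L2neg[OF cl PQ' _ msb] by blast
                qed
              next
                case False
                then have "s \<beta> \<in> neg_roots R C" using b unfolding \<Phi>m_def by blast
                then show ?thesis using L2neg[OF cl PQ' _ sbQ' gsb] by blast
              qed
            qed
          qed
        qed
      qed
      have "- (- \<alpha>) \<in> Q'"
      proof (rule L3[OF cl PQ' N_negP[OF aN]])
        show "\<forall>\<gamma>\<in>supp R C (- \<alpha>). - \<gamma> \<in> Q'" using key supp_uminus[OF aR] by simp
      qed
      then show ?thesis by simp
    qed
  qed

  have hull: "closed_hull R (Q \<union> s ` Q) = QP"
  proof
    show "closed_hull R (Q \<union> s ` Q) \<subseteq> QP"
      unfolding closed_hull_def using QPcl QsubQP sQsubQP by blast
    show "QP \<subseteq> closed_hull R (Q \<union> s ` Q)"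
      unfolding closed_hull_def using minimal by blast
  qed

  have sQPcl: "closed_subset R (s ` QP)"
    unfolding closed_subset_def
  proof (intro conjI ballI impI)
    show "s ` QP \<subseteq> R" using QPR sR by blast
    fix a b assume ab: "a \<in> s ` QP" "b \<in> s ` QP" "a + b \<in> R"
    then obtain \<alpha> \<beta> where "\<alpha> \<in> QP" "\<beta> \<in> QP" "a = s \<alpha>" "b = s \<beta>" by blast
    moreover have "s (a + b) \<in> R" using sRin ab(3) by blast
    ultimately have "\<alpha> + \<beta> \<in> R" using sadd ss by simp
    then have "\<alpha> + \<beta> \<in> QP" using QPcl \<open>\<alpha> \<in> QP\<close> \<open>\<beta> \<in> QP\<close> unfolding closed_subset_def by blast
    then have "s (\<alpha> + \<beta>) \<in> s ` QP" by blast
    then show "a + b \<in> s ` QP" using sadd \<open>a = s \<alpha>\<close> \<open>b = s \<beta>\<close> by simp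
  qed
  have "Q \<subseteq> s ` QP"
  proof
    fix \<alpha> assume "\<alpha> \<in> Q"
    then have "s \<alpha> \<in> QP" using sQsubQP by blast
    then have "s (s \<alpha>) \<in> s ` QP" by blast
    then show "\<alpha> \<in> s ` QP" using ss by simp
  qed
  moreover have "s ` Q \<subseteq> s ` QP" using QsubQP by blast
  ultimately have QPs: "QP \<subseteq> s ` QP" using minimal[OF sQPcl] by blast
  have "s ` QP \<subseteq> s ` (s ` QP)" using QPs by blast
  also have "s ` (s ` QP) = QP" using ss by (simp add: image_comp comp_def)
  finally have tr: "totally_real QP s" unfolding totally_real_def using QPs by blast

  have fund: "fundamental R Q s \<longleftrightarrow> \<Psi> = {}"
  proof
    assume "fundamental R Q s"
    then have eq: "QP = R" using hull unfolding fundamental_def by simp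
    show "\<Psi> = {}"
    proof (rule ccontr)
      assume "\<Psi> \<noteq> {}"
      then obtain \<psi> where p: "\<psi> \<in> \<Psi>" by blast
      then have pB: "\<psi> \<in> simple_roots R C" using PsiB by blast
      then have pR: "\<psi> \<in> R" using BR by blast
      have mR: "- \<psi> \<in> R" using neg_in pR by blast
      have "coef (- \<psi>) \<psi> = -1" using coef_uminus[OF pR pB] coef_simple[OF pB pB] by simp
      then have "- \<psi> \<notin> QP" using memQ[OF mR] p by force
      then show False using eq mR by blast
    qed
  next
    assume e: "\<Psi> = {}"
    have "QP = R"
    proof
      show "QP \<subseteq> R" by (rule QPR)
      show "R \<subseteq> QP" using memQ e by blast
    qed
    then show "fundamental R Q s" using hull unfolding fundamental_def by simp
  qed

  show ?thesis
    using QPpar QsubQP sQsubQP minimal hull tr fund unfolding QP_def by blast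
qed

end
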